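(* Let $S_{\mathrm{test}}\subseteq\{\pm1\}^n\times\{\pm1\}$ be a finite labeled test set, $d\ge0$, $s\ge1$, $\varepsilon_a>0$, and $\mathcal{H}$ a mapping from restrictions of depth $\le d$ to hypotheses. If there is some list $P$ of $s$ pairwise disjoint restrictions, each of depth $\le d$, for which $\mathrm{error}(P\circ\mathcal{H},S_{\mathrm{test}})\le\varepsilon$, then $\mathrm{FindSubcubeList}(S_{\mathrm{test}},\mathcal{H},\varepsilon_a,s)$ outputs a (not necessarily disjoint) list $L$ of restrictions satisfying \[ \mathrm{error}(L\circ\mathcal{H},S_{\mathrm{test}})\le O\left(\varepsilon\log(1/\varepsilon_a)+\varepsilon_a\right). \]
   Context: A restriction is $\rho\in\{\pm1,\star\}^n$; $x\in\rho$ means $x_i=\rho_i$ or $\rho_i=\star$ for all $i$; depth of $\rho$ = number of non-$\star$ coordinates; two restrictions are disjoint if no $x$ is consistent with both. For a labeled set $S$, $S_\rho=\{(x,y)\in S:x\in\rho\}$ and $\mathrm{error}(h,S)$ is the fraction of $(x,y)\in S$ with $h(x)\neq y$, where an output $\bot$ always counts as an error. For an ordered list $L$ of restrictions, the subcube list hypothesis $L\circ\mathcal{H}$ outputs $\mathcal{H}(\rho)(x)$ for the first $\rho\in L$ with $x\in\rho$, and $\bot$ if no such $\rho$ exists. Procedure $\mathrm{FindSubcubeList}(S_{\mathrm{test}},\mathcal{H},\varepsilon_a,s)$: set $S_{\mathrm{rem}}\leftarrow S_{\mathrm{test}}$, $L\leftarrow$ empty list; while $|S_{\mathrm{rem}}|/|S_{\mathrm{test}}|>\varepsilon_a$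 and at most $\lceil 2s\ln(1/\varepsilon_a)\rceil$ iterations have run: among all restrictions $\rho$ of depth $\le d$ with $|(S_{\mathrm{rem}})_\rho|/|S_{\mathrm{rem}}|\ge\frac{1}{2s}$, choose $\rho^\star$ minimizing $\mathrm{error}(\mathcal{H}(\rho),(S_{\mathrm{rem}})_\rho)$; append $\rho^\star$ to $L$ and set $S_{\mathrm{rem}}\leftarrow S_{\mathrm{rem}}\setminus(S_{\mathrm{rem}})_{\rho^\star}$; finally return $L$. *)

theory Defs
  imports Complex_Main
begin

text \<open>Points of the cube: bool lists (True = +1, False = -1); labels are bools.
  Restrictions: lists of bool option (None = star, Some b = fixed coordinate).\<close>

type_synonym point = "bool list"
type_synonym restriction = "bool option list"
type_synonym hyp = "point \<Rightarrow> bool"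

definition consistent :: "point \<Rightarrow> restriction \<Rightarrow> bool" where
  "consistent x \<rho> \<longleftrightarrow> list_all2 (\<lambda>xi ri. ri = None \<or> ri = Some xi) x \<rho>"

definition depth :: "restriction \<Rightarrow> nat" where
  "depth \<rho> = length (filter (\<lambda>r. r \<noteq> None) \<rho>)"

definition restr_disjoint :: "restriction \<Rightarrow> restriction \<Rightarrow> bool" where
  "restr_disjoint \<rho>1 \<rho>2 \<longleftrightarrow> \<not> (\<exists>x. consistent x \<rho>1 \<and> consistent x \<rho>2)"

definition restrict_set :: "(point \<times> bool) set \<Rightarrow> restriction \<Rightarrow> (point \<times> bool) set" where
  "restrict_set S \<rho> = {(x, y) \<in> S. consistent x \<rho>}"

text \<open>Error of a possibly-abstaining hypothesis (None = bottom, always an error).\<close>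
definition error :: "(point \<Rightarrow> bool option) \<Rightarrow> (point \<times> bool) set \<Rightarrow> real" where
  "error h S = real (card {(x, y) \<in> S. h x \<noteq> Some y}) / real (card S)"

fun subcube_list_hyp :: "restriction list \<Rightarrow> (restriction \<Rightarrow> hyp) \<Rightarrow> point \<Rightarrow> bool option" where
  "subcube_list_hyp [] H x = None"
| "subcube_list_hyp (\<rho> # L) H x =
     (if consistent x \<rho> then Some (H \<rho> x) else subcube_list_hyp L H x)"

definition candidates :: "nat \<Rightarrow> nat \<Rightarrow> nat \<Rightarrow> (point \<times> bool) set \<Rightarrow> restriction set" where
  "candidates n d s R = {\<rho>. length \<rho> = n \<and> depth \<rho> \<le> d \<and>
      real (card (restrict_set R \<rho>)) / real (card R) \<ge> 1 / (2 * real s)}"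

definition iter_bound :: "nat \<Rightarrow> real \<Rightarrow> nat" where
  "iter_bound s ea = nat \<lceil>2 * real s * ln (1 / ea)\<rceil>"

definition loop_cond :: "(point \<times> bool) set \<Rightarrow> real \<Rightarrow> nat \<Rightarrow> (point \<times> bool) set \<Rightarrow> nat \<Rightarrow> bool" where
  "loop_cond S ea s R k \<longleftrightarrow>
     real (card R) / real (card S) > ea \<and> k < iter_bound s ea"

text \<open>Reachable states (S_rem, L, number of iterations) of FindSubcubeList(S, H, ea, s)
  with depth parameter d on n-dimensional points; ties in the argmin are resolved
  arbitrarily (all choices are allowed).\<close>
inductive fsl_reach :: "nat \<Rightarrow> nat \<Rightarrow> (point \<times> bool) set \<Rightarrow> (restriction \<Rightarrow> hyp) \<Rightarrow> real \<Rightarrow> nat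
    \<Rightarrow> (point \<times> bool) set \<Rightarrow> restriction list \<Rightarrow> nat \<Rightarrow> bool"
  for n d S H ea s where
  init: "fsl_reach n d S H ea s S [] 0"
| step: "fsl_reach n d S H ea s R L k \<Longrightarrow> loop_cond S ea s R k \<Longrightarrow>
     \<rho> \<in> candidates n d s R \<Longrightarrow>
     (\<forall>\<rho>' \<in> candidates n d s R.
        error (\<lambda>x. Some (H \<rho> x)) (restrict_set R \<rho>) \<le> error (\<lambda>x. Some (H \<rho>' x)) (restrict_set R \<rho>')) \<Longrightarrow>
     fsl_reach n d S H ea s (R - restrict_set R \<rho>) (L @ [\<rho>]) (Suc k)"

definition find_subcube_list ::
  "nat \<Rightarrow> nat \<Rightarrow> (point \<times> bool) set \<Rightarrow> (restriction \<Rightarrow> hyp) \<Rightarrow> real \<Rightarrow> nat \<Rightarrow> restriction list \<Rightarrow> bool" where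
  "find_subcube_list n d S H ea s L \<longleftrightarrow>
     (\<exists>R k. fsl_reach n d S H ea s R L k \<and> \<not> loop_cond S ea s R k)"

end

theory Submission
  imports Defs
begin

lemma find_app: "find Q (xs @ ys) = (case find Q xs of None \<Rightarrow> find Q ys | Some x \<Rightarrow> Some x)"
  by (induction xs) auto

lemma hyp_find: "subcube_list_hyp L H x = map_option (\<lambda>\<rho>. H \<rho> x) (find (consistent x) L)"
  by (induction L) auto

definition Fpot :: "real \<Rightarrow> real \<Rightarrow> real \<Rightarrow> real \<Rightarrow> real" where
  "Fpot E N t r = (if r \<ge> t then 4*E*ln(N/r) else 4*E*ln(N/t) + (t - r))"

lemma pot_step:
  fixes E N t ea r m e c :: real
  assumes E0: "E \<ge> 0" and N0: "N > 0" and tdef: "t = max (4*E) (ea*N)" and ea0: "ea > 0"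
    and rgt: "r > ea*N" and m0: "0 \<le> m" "m \<le> r" and e0: "0 \<le> e" "e \<le> m"
    and eb: "r \<ge> 4*E \<Longrightarrow> e \<le> 4*E*m/r" and c: "c \<le> Fpot E N t r"
  shows "c + e \<le> Fpot E N t (r - m)"
proof -
  have t0: "t > 0" using tdef ea0 N0 by (smt (verit) mult_pos_pos)
  have r0: "r > 0" using rgt ea0 N0 by (smt (verit) mult_pos_pos)
  show ?thesis
  proof (cases "r \<ge> t")
    case True
    hence r4: "r \<ge> 4*E" using tdef by simp
    have eb': "e \<le> 4*E*(m/r)" using eb[OF r4] by simp
    have cF: "c \<le> 4*E*(ln N - ln r)" using c True N0 r0 by (simp add: Fpot_def ln_div)
    show ?thesis
    proof (cases "r - m \<ge> t")
      case True2: True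
      have rm0: "r - m > 0" using True2 t0 by simp
      have l1: "ln ((r-m)/r) \<le> (r-m)/r - 1" using rm0 r0 by (intro ln_le_minus_one) simp
      have "(r-m)/r - 1 = - (m/r)" using r0 by (simp add: field_simps)
      hence "m/r \<le> ln r - ln (r-m)" using l1 rm0 r0 by (simp add: ln_div)
      hence "4*E*(m/r) \<le> 4*E*(ln r - ln (r-m))" using E0 by (intro mult_left_mono) auto
      moreover have "Fpot E N t (r-m) = 4*E*(ln N - ln (r-m))" using True2 N0 rm0 by (simp add: Fpot_def ln_div)
      ultimately show ?thesis using cF eb' by (simp add: algebra_simps)
    next
      case False2: False
      have l1: "ln (t/r) \<le> t/r - 1" using t0 r0 by (intro ln_le_minus_one) simp
      hence l2: "ln r - ln t \<ge> 1 - t/r" using t0 r0 by (simp add: ln_div)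
      have F: "Fpot E N t (r-m) = 4*E*(ln N - ln t) + (t - (r - m))" using False2 N0 t0 by (simp add: Fpot_def ln_div)
      have q: "4*E/r \<le> 1" using r4 r0 by simp
      have "(4*E/r) * (t - (r-m)) \<le> 1 * (t - (r-m))" using q False2 by (intro mult_right_mono) auto
      moreover have "(4*E/r) * (t - (r-m)) = 4*E*(t/r) - 4*E*((r-m)/r)" using r0 by (simp add: field_simps)
      ultimately have h: "4*E*(t/r) - 4*E*((r-m)/r) \<le> t - (r-m)" by simp
      have "m/r = 1 - (r-m)/r" using r0 by (simp add: field_simps)
      hence "4*E*(m/r) = 4*E - 4*E*((r-m)/r)" by (metis right_diff_distrib mult.right_neutral)
      also have "\<dots> \<le> 4*E - 4*E*(t/r) + (t - (r-m))" using h by simp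
      also have "\<dots> \<le> 4*E*(ln r - ln t) + (t - (r-m))"
      proof -
        have "4*E*(1 - t/r) \<le> 4*E*(ln r - ln t)" using l2 E0 by (intro mult_left_mono) auto
        thus ?thesis by (simp add: algebra_simps)
      qed
      finally show ?thesis using cF eb' F by (simp add: algebra_simps)
    qed
  next
    case False
    hence F1: "Fpot E N t r = 4*E*ln(N/t) + (t - r)" by (simp add: Fpot_def)
    have "\<not> (r - m \<ge> t)" using False m0 by simp
    hence "Fpot E N t (r-m) = 4*E*ln(N/t) + (t - (r-m))" by (simp add: Fpot_def)
    thus ?thesis using F1 c e0 by simp
  qed
qed

lemma core:
  fixes R S :: "(point \<times> bool) set" and E :: real
  assumes finS: "finite S" and RS: "R \<subseteq> S" and r0: "card R > 0"
    and lenP: "length P = s" and s1: "s \<ge> 1"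
    and Pprop: "\<forall>\<rho> \<in> set P. length \<rho> = n \<and> depth \<rho> \<le> d"
    and disj: "\<forall>i < s. \<forall>j < s. i \<noteq> j \<longrightarrow> restr_disjoint (P ! i) (P ! j)"
    and Eb: "real (card {(x, y) \<in> S. subcube_list_hyp P H x \<noteq> Some y}) \<le> E"
    and r4: "4*E \<le> real (card R)"
  shows "\<exists>\<rho>'\<in>candidates n d s R. error (\<lambda>x. Some (H \<rho>' x)) (restrict_set R \<rho>') \<le> 4*E / real (card R)"
proof (rule ccontr)
  assume neg: "\<not> ?thesis"
  define r where "r = real (card R)"
  have finR: "finite R" using finS RS finite_subset by blast
  define C where "C i = restrict_set R (P!i)" for i
  define Er where "Er i = {(x,y) \<in> C i. H (P!i) x \<noteq> y}" for i
  define U where "U = {(x,y) \<in> R. \<forall>i<s. \<not> consistent x (P!i)}"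
  define Bad where "Bad = {(x, y) \<in> S. subcube_list_hyp P H x \<noteq> Some y}"
  have finC: "finite (C i)" for i by (rule finite_subset[OF _ finR]) (auto simp: C_def restrict_set_def)
  have finEr: "finite (Er i)" for i by (rule finite_subset[OF _ finC[of i]]) (auto simp: Er_def)
  have finU: "finite U" by (rule finite_subset[OF _ finR]) (auto simp: U_def)
  have finBad: "finite Bad" by (rule finite_subset[OF _ finS]) (auto simp: Bad_def)
  have UBad: "U \<subseteq> Bad"
  proof
    fix z assume z: "z \<in> U"
    obtain x y where zxy: "z = (x,y)" by fastforce
    have "find (consistent x) P = None" using z zxy lenP
      by (auto simp: U_def find_None_iff in_set_conv_nth)
    thus "z \<in> Bad" using z zxy RS by (auto simp: U_def Bad_def hyp_find)
  qed
  have ErBad: "Er i \<subseteq> Bad" if i: "i < s" for i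
  proof
    fix z assume z: "z \<in> Er i"
    obtain x y where zxy: "z = (x,y)" by fastforce
    have ci: "consistent x (P!i)" and hy: "H (P!i) x \<noteq> y" and zR: "(x,y) \<in> R"
      using z zxy by (auto simp: Er_def C_def restrict_set_def)
    have "\<not> consistent x (P!j)" if "j < s" "j \<noteq> i" for j
      using disj that i ci by (auto simp: restr_disjoint_def)
    hence "find (consistent x) P = Some (P!i)"
      using ci i lenP unfolding find_Some_iff by (intro exI[of _ i]) auto
    thus "z \<in> Bad" using zR RS zxy hy by (auto simp: Bad_def hyp_find)
  qed
  have ErC: "Er i \<subseteq> C i" for i by (auto simp: Er_def)
  have Cdisj: "C i \<inter> C j = {}" if "i < s" "j < s" "i \<noteq> j" for i j
    using disj that by (auto simp: C_def restrict_set_def restr_disjoint_def)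
  have UC: "U \<inter> C i = {}" if "i < s" for i
    using that by (auto simp: U_def C_def restrict_set_def)
  have cardErU: "card U + (\<Sum>i<s. card (Er i)) \<le> card Bad"
  proof -
    have d1: "card (\<Union>i<s. Er i) = (\<Sum>i<s. card (Er i))"
      using Cdisj ErC finEr by (intro card_UN_disjoint) blast+
    have d2: "card (U \<union> (\<Union>i<s. Er i)) = card U + card (\<Union>i<s. Er i)"
      using UC ErC finEr finU by (intro card_Un_disjoint) blast+
    have "card (U \<union> (\<Union>i<s. Er i)) \<le> card Bad"
      using UBad ErBad finBad by (intro card_mono) auto
    thus ?thesis using d1 d2 by simp
  qed
  have RUC: "R \<subseteq> U \<union> (\<Union>i<s. C i)"
    by (auto simp: U_def C_def restrict_set_def)
  have cardR: "card R \<le> card U + (\<Sum>i<s. card (C i))"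
  proof -
    have "card R \<le> card (U \<union> (\<Union>i<s. C i))" using RUC finU finC by (intro card_mono) auto
    also have "\<dots> \<le> card U + card (\<Union>i<s. C i)" by (rule card_Un_le)
    also have "card (\<Union>i<s. C i) \<le> (\<Sum>i<s. card (C i))" by (rule card_UN_le) simp
    finally show ?thesis by simp
  qed
  define B where "B = {i. i < s \<and> real (card (C i)) / r \<ge> 1 / (2 * real s)}"
  have rpos: "r > 0" using r0 by (simp add: r_def)
  have Bsub: "B \<subseteq> {..<s}" by (auto simp: B_def)
  have candB: "P!i \<in> candidates n d s R" if "i \<in> B" for i
    using that Pprop lenP by (auto simp: B_def candidates_def C_def r_def)
  have Cpos: "real (card (C i)) > 0" if "i \<in> B" for i
  proof -
    have "1 / (2 * real s) > 0" using s1 by simp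
    moreover have "1 / (2 * real s) \<le> real (card (C i)) / r" using that by (simp add: B_def)
    ultimately have "real (card (C i)) / r > 0" by linarith
    thus ?thesis using rpos by (simp add: zero_less_divide_iff)
  qed
  have big: "r * real (card (Er i)) > 4*E * real (card (C i))" if "i \<in> B" for i
  proof -
    have "error (\<lambda>x. Some (H (P!i) x)) (restrict_set R (P!i)) > 4*E / r"
      using neg candB[OF that] by (auto simp: r_def)
    moreover have "{(x, y) \<in> C i. Some (H (P!i) x) \<noteq> Some y} = Er i" by (auto simp: Er_def)
    ultimately have "real (card (Er i)) / real (card (C i)) > 4*E/r"
      by (simp add: error_def C_def)
    thus ?thesis using Cpos[OF that] rpos by (simp add: field_simps)
  qed
  have small: "real (card (C i)) \<le> r / (2 * real s)" if "i < s" "i \<notin> B" for i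
  proof -
    have "real (card (C i)) / r < 1 / (2 * real s)" using that by (auto simp: B_def)
    thus ?thesis using rpos by (simp add: field_simps)
  qed
  have splitC: "(\<Sum>i<s. real (card (C i))) = (\<Sum>i\<in>B. real (card (C i))) + (\<Sum>i\<in>{..<s}-B. real (card (C i)))"
    using sum.subset_diff[OF Bsub, of "\<lambda>i. real (card (C i))"] by simp
  have splitEr: "(\<Sum>i<s. real (card (Er i))) \<ge> (\<Sum>i\<in>B. real (card (Er i)))"
    using Bsub by (intro sum_mono2) auto
  have sm: "(\<Sum>i\<in>{..<s}-B. real (card (C i))) \<le> r / 2"
  proof -
    have "(\<Sum>i\<in>{..<s}-B. real (card (C i))) \<le> (\<Sum>i\<in>{..<s}-B. r / (2 * real s))"
      using small by (intro sum_mono) auto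
    also have "\<dots> = real (card ({..<s}-B)) * (r / (2 * real s))" by simp
    also have "\<dots> \<le> real s * (r / (2 * real s))"
    proof -
      have "card ({..<s}-B) \<le> s" using card_mono[of "{..<s}" "{..<s}-B"] by auto
      thus ?thesis using rpos by (intro mult_right_mono) auto
    qed
    also have "\<dots> = r / 2" using s1 by (simp add: field_simps)
    finally show ?thesis .
  qed
  have cR: "r \<le> real (card U) + (\<Sum>i<s. real (card (C i)))"
  proof -
    have "real (card R) \<le> real (card U + (\<Sum>i<s. card (C i)))" using cardR by (simp only: of_nat_le_iff)
    thus ?thesis unfolding r_def by simp
  qed
  have cE: "real (card U) + (\<Sum>i<s. real (card (Er i))) \<le> E"
  proof -
    have "real (card U + (\<Sum>i<s. card (Er i))) \<le> real (card Bad)" using cardErU by (simp only: of_nat_le_iff)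
    thus ?thesis using Eb unfolding Bad_def by simp
  qed
  have E0: "E \<ge> 0" using Eb of_nat_0_le_iff order_trans by blast
  show False
  proof (cases "B = {}")
    case True
    have z: "(\<Sum>i\<in>B. real (card (C i))) = 0" using True by simp
    have "r \<le> real (card U) + r/2" using cR splitC sm z by linarith
    moreover have "real (card U) \<le> E" using cE sum_nonneg[of "{..<s}" "\<lambda>i. real (card (Er i))"] by linarith
    ultimately show False using r4 rpos unfolding r_def by linarith
  next
    case False
    have finB: "finite B" using Bsub finite_subset by blast
    have "(\<Sum>i\<in>B. 4*E * real (card (C i))) < (\<Sum>i\<in>B. r * real (card (Er i)))"
      using big False finB by (intro sum_strict_mono) auto
    hence A1: "4*E * (\<Sum>i\<in>B. real (card (C i))) < r * (\<Sum>i\<in>B. real (card (Er i)))"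
      by (simp only: sum_distrib_left)
    have A2: "(\<Sum>i\<in>B. real (card (C i))) \<ge> r/2 - real (card U)" using cR splitC sm by linarith
    have A3: "(\<Sum>i\<in>B. real (card (Er i))) \<le> E - real (card U)" using cE splitEr by linarith
    have "4*E * (r/2 - real (card U)) \<le> 4*E * (\<Sum>i\<in>B. real (card (C i)))"
      using A2 E0 by (intro mult_left_mono) auto
    moreover have "r * (\<Sum>i\<in>B. real (card (Er i))) \<le> r * (E - real (card U))"
      using A3 rpos by (intro mult_left_mono) auto
    ultimately have "4*E * (r/2 - real (card U)) < r * (E - real (card U))" using A1 by linarith
    hence "0 < r * (E - real (card U)) - 4*E * (r/2 - real (card U))" by linarith
    moreover have "r * (E - real (card U)) - 4*E * (r/2 - real (card U)) = - (E*r) - real (card U) * (r - 4*E)"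
      by (simp add: algebra_simps)
    moreover have "real (card U) * (r - 4*E) \<ge> 0" using r4 unfolding r_def by simp
    moreover have "E * r \<ge> 0" using E0 rpos by simp
    ultimately show False by linarith
  qed
qed

lemma reach_inv:
  fixes S :: "(point \<times> bool) set" and E :: real
  assumes reach: "fsl_reach n d S H ea s R L k"
    and finS: "finite S" and s1: "s \<ge> 1"
    and lenP: "length P = s"
    and Pprop: "\<forall>\<rho> \<in> set P. length \<rho> = n \<and> depth \<rho> \<le> d"
    and disj: "\<forall>i < s. \<forall>j < s. i \<noteq> j \<longrightarrow> restr_disjoint (P ! i) (P ! j)"
    and Eb: "real (card {(x, y) \<in> S. subcube_list_hyp P H x \<noteq> Some y}) \<le> E"
    and ea0: "0 < ea" and ea1: "ea < 1" and NE: "4*E \<le> real (card S)" and Npos: "card S > 0"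
  shows "R \<subseteq> S \<and> (\<forall>z\<in>R. \<forall>\<rho>\<in>set L. \<not> consistent (fst z) \<rho>)
    \<and> (\<forall>z\<in>S-R. find (consistent (fst z)) L \<noteq> None)
    \<and> real (card R) \<le> (1 - 1/(2*real s))^k * real (card S)
    \<and> real (card {(x,y)\<in>S-R. subcube_list_hyp L H x \<noteq> Some y})
        \<le> Fpot E (real (card S)) (max (4*E) (ea*real (card S))) (real (card R))"
  using reach
proof induction
  case init
  have "real (card S) \<ge> max (4*E) (ea*real (card S))" using NE ea1 Npos by simp
  thus ?case using Npos by (simp add: Fpot_def)
next
  case (step R L k \<rho>)
  define N where "N = real (card S)"
  define t where "t = max (4*E) (ea*N)"
  define R\<rho> where "R\<rho> = restrict_set R \<rho>"
  have RS: "R \<subseteq> S" and nc: "\<forall>z\<in>R. \<forall>\<rho>\<in>set L. \<not> consistent (fst z) \<rho>"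
    and fnd: "\<forall>z\<in>S-R. find (consistent (fst z)) L \<noteq> None"
    and geo: "real (card R) \<le> (1 - 1/(2*real s))^k * N"
    and pot: "real (card {(x,y)\<in>S-R. subcube_list_hyp L H x \<noteq> Some y}) \<le> Fpot E N t (real (card R))"
    using step.IH by (auto simp: N_def t_def)
  have finR: "finite R" using RS finS finite_subset by blast
  have RrR: "R\<rho> \<subseteq> R" by (auto simp: R\<rho>_def restrict_set_def)
  have finRr: "finite R\<rho>" using RrR finR finite_subset by blast
  have Npos': "N > 0" using Npos by (simp add: N_def)
  have rgt: "real (card R) > ea * N" using step.hyps(2) Npos' by (simp add: loop_cond_def N_def field_simps)
  have r0: "card R > 0"
  proof -
    have "ea * N > 0" using ea0 Npos' by simp
    thus ?thesis using rgt by linarith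
  qed
  have ratio: "real (card R\<rho>) / real (card R) \<ge> 1 / (2 * real s)"
    using step.hyps(3) by (simp add: candidates_def R\<rho>_def)
  have mlow: "real (card R\<rho>) \<ge> real (card R) / (2 * real s)"
    using ratio r0 by (simp add: field_simps)
  have cardR': "card (R - R\<rho>) = card R - card R\<rho>" using RrR finRr by (simp add: card_Diff_subset)
  have cardR'r: "real (card (R - R\<rho>)) = real (card R) - real (card R\<rho>)"
    using cardR' card_mono[OF finR RrR] by simp
  have P1: "R - R\<rho> \<subseteq> S" using RS by auto
  have P2: "\<forall>z\<in>R - R\<rho>. \<forall>\<rho>'\<in>set (L @ [\<rho>]). \<not> consistent (fst z) \<rho>'"
    using nc by (auto simp: R\<rho>_def restrict_set_def)
  have P3: "\<forall>z\<in>S-(R - R\<rho>). find (consistent (fst z)) (L @ [\<rho>]) \<noteq> None"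
  proof
    fix z assume z: "z \<in> S - (R - R\<rho>)"
    show "find (consistent (fst z)) (L @ [\<rho>]) \<noteq> None"
    proof (cases "z \<in> R")
      case True
      hence "z \<in> R\<rho>" using z by auto
      hence "consistent (fst z) \<rho>" by (auto simp: R\<rho>_def restrict_set_def)
      thus ?thesis by (simp add: find_app split: option.split)
    next
      case False
      thus ?thesis using z fnd by (auto simp: find_app split: option.split)
    qed
  qed
  have q0: "1 - 1/(2*real s) \<ge> 0" using s1 by (simp add: field_simps)
  have P4: "real (card (R - R\<rho>)) \<le> (1 - 1/(2*real s))^(Suc k) * N"
  proof -
    have "real (card (R - R\<rho>)) \<le> real (card R) - real (card R) / (2 * real s)" using cardR'r mlow by linarith
    also have "\<dots> = (1 - 1/(2*real s)) * real (card R)" by (simp add: algebra_simps)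
    also have "\<dots> \<le> (1 - 1/(2*real s)) * ((1 - 1/(2*real s))^k * N)" using geo q0 by (intro mult_left_mono)
    finally show ?thesis by simp
  qed
  define e where "e = card {(x,y)\<in>R\<rho>. H \<rho> x \<noteq> y}"
  have seteq: "{(x,y)\<in>S-(R - R\<rho>). subcube_list_hyp (L @ [\<rho>]) H x \<noteq> Some y}
      = {(x,y)\<in>S-R. subcube_list_hyp L H x \<noteq> Some y} \<union> {(x,y)\<in>R\<rho>. H \<rho> x \<noteq> y}"
  proof -
    have a: "subcube_list_hyp (L @ [\<rho>]) H x = subcube_list_hyp L H x" if xy: "(x,y) \<in> S - R" for x y
    proof -
      obtain \<rho>0 where "find (consistent x) L = Some \<rho>0" using fnd xy by (metis fst_conv option.exhaust)
      thus ?thesis by (simp add: hyp_find find_app)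
    qed
    have b: "subcube_list_hyp (L @ [\<rho>]) H x = Some (H \<rho> x)" if "(x,y) \<in> R\<rho>" for x y
    proof -
      have "(x,y) \<in> R" using that RrR by blast
      hence "find (consistent x) L = None" using nc by (force simp: find_None_iff)
      moreover have "consistent x \<rho>" using that by (auto simp: R\<rho>_def restrict_set_def)
      ultimately show ?thesis by (simp add: hyp_find find_app)
    qed
    show ?thesis using a b RrR RS by auto
  qed
  have fin1: "finite {(x,y)\<in>S-R. subcube_list_hyp L H x \<noteq> Some y}"
    by (rule finite_subset[OF _ finS]) auto
  have fin2: "finite {(x,y)\<in>R\<rho>. H \<rho> x \<noteq> y}"
    by (rule finite_subset[OF _ finRr]) auto
  have cardeq: "card {(x,y)\<in>S-(R - R\<rho>). subcube_list_hyp (L @ [\<rho>]) H x \<noteq> Some y}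
      = card {(x,y)\<in>S-R. subcube_list_hyp L H x \<noteq> Some y} + e"
    unfolding seteq e_def using fin1 fin2 RrR by (intro card_Un_disjoint) auto
  have em: "e \<le> card R\<rho>" unfolding e_def by (rule card_mono[OF finRr]) auto
  have E0: "E \<ge> 0" using Eb of_nat_0_le_iff order_trans by blast
  have eb: "real e \<le> 4*E*real (card R\<rho>)/real (card R)" if r4: "real (card R) \<ge> 4*E"
  proof -
    obtain \<rho>' where c': "\<rho>' \<in> candidates n d s R"
        and er': "error (\<lambda>x. Some (H \<rho>' x)) (restrict_set R \<rho>') \<le> 4*E / real (card R)"
      using core[OF finS RS r0 lenP s1 Pprop disj Eb r4] by blast
    have "error (\<lambda>x. Some (H \<rho> x)) R\<rho> \<le> 4*E / real (card R)"
      using step.hyps(4) c' er' unfolding R\<rho>_def by fastforce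
    moreover have "{(x,y)\<in>R\<rho>. Some (H \<rho> x) \<noteq> Some y} = {(x,y)\<in>R\<rho>. H \<rho> x \<noteq> y}" by auto
    ultimately have "real e / real (card R\<rho>) \<le> 4*E / real (card R)"
      by (simp add: error_def e_def)
    moreover have "real (card R\<rho>) > 0" using mlow r0 s1
      by (smt (verit) divide_pos_pos of_nat_0_less_iff of_nat_1 of_nat_le_iff)
    ultimately show ?thesis using r0 by (simp add: field_simps)
  qed
  have P5: "real (card {(x,y)\<in>S-(R - R\<rho>). subcube_list_hyp (L @ [\<rho>]) H x \<noteq> Some y})
        \<le> Fpot E N t (real (card (R - R\<rho>)))"
    unfolding cardeq cardR'r of_nat_add
    by (rule pot_step[OF E0 Npos' t_def ea0 rgt _ _ _ _ _ pot]) (use em eb card_mono[OF finR RrR] in auto)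
  show ?case using P1 P2 P3 P4 P5 by (simp add: N_def t_def R\<rho>_def)
qed

theorem lemma7p5:
  "\<exists>C > 0. \<forall>(n::nat) (d::nat) (s::nat) (ea::real) (\<epsilon>::real)
      (S :: (point \<times> bool) set) (H :: restriction \<Rightarrow> hyp)
      (P :: restriction list) (L :: restriction list).
     finite S \<longrightarrow> (\<forall>(x, y) \<in> S. length x = n) \<longrightarrow>
     s \<ge> 1 \<longrightarrow> 0 < ea \<longrightarrow> ea < 1 \<longrightarrow>
     length P = s \<longrightarrow>
     (\<forall>\<rho> \<in> set P. length \<rho> = n \<and> depth \<rho> \<le> d) \<longrightarrow>
     (\<forall>i < s. \<forall>j < s. i \<noteq> j \<longrightarrow> restr_disjoint (P ! i) (P ! j)) \<longrightarrow>
     error (subcube_list_hyp P H) S \<le> \<epsilon> \<longrightarrow>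
     find_subcube_list n d S H ea s L \<longrightarrow>
     error (subcube_list_hyp L H) S \<le> C * (\<epsilon> * ln (1 / ea) + ea)"
proof (rule exI[of _ 8], intro conjI allI impI)
  fix n d s ea \<epsilon> S H P L
  assume finS: "finite S" and lenS: "\<forall>(x, y) \<in> S. length x = n" and s1: "s \<ge> 1"
    and ea0: "0 < ea" and ea1: "ea < 1" and lenP: "length P = s"
    and Pprop: "\<forall>\<rho> \<in> set P. length \<rho> = n \<and> depth \<rho> \<le> d"
    and disj: "\<forall>i < s. \<forall>j < s. i \<noteq> j \<longrightarrow> restr_disjoint (P ! i) (P ! j)"
    and errP: "error (subcube_list_hyp P H) S \<le> \<epsilon>"
    and fsl: "find_subcube_list n d S H ea s L"
  define N where "N = real (card S)"
  define Lg where "Lg = ln (1 / ea)"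
  have Lg0: "Lg > 0" using ea0 ea1 by (simp add: Lg_def)
  have eps0: "\<epsilon> \<ge> 0"
  proof -
    have "error (subcube_list_hyp P H) S \<ge> 0" by (simp add: error_def)
    thus ?thesis using errP by linarith
  qed
  have nn: "\<epsilon> * Lg \<ge> 0" using eps0 Lg0 by simp
  define Bad where "Bad = {(x, y) \<in> S. subcube_list_hyp L H x \<noteq> Some y}"
  have finBad: "finite Bad" by (rule finite_subset[OF _ finS]) (auto simp: Bad_def)
  have errL_def': "error (subcube_list_hyp L H) S = real (card Bad) / N"
    by (simp add: error_def Bad_def N_def)
  have errL1: "error (subcube_list_hyp L H) S \<le> 1"
  proof -
    have "card Bad \<le> card S" using finS by (intro card_mono) (auto simp: Bad_def)
    hence "real (card Bad) \<le> real (card S)" by simp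
    thus ?thesis unfolding errL_def' N_def
      by (cases "card S = 0") (simp_all add: divide_le_eq_1)
  qed
  show "error (subcube_list_hyp L H) S \<le> 8 * (\<epsilon> * ln (1 / ea) + ea)"
  proof (cases "ea \<ge> 1/8")
    case True
    hence "8*(\<epsilon>*Lg + ea) \<ge> 1" using nn unfolding distrib_left by linarith
    thus ?thesis using errL1 unfolding Lg_def by linarith
  next
    case False
    have "ln 8 \<ge> (1::real)"
    proof -
      have "exp 1 \<le> (8::real)" using exp_le by linarith
      hence "ln (exp 1) \<le> ln (8::real)" by (subst ln_le_cancel_iff) auto
      thus ?thesis by simp
    qed
    moreover have "ln 8 \<le> Lg"
    proof -
      have "ea * 8 \<le> 1" using False by linarith
      hence "8 \<le> 1/ea" using ea0 by (simp add: pos_le_divide_eq)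
      thus ?thesis unfolding Lg_def using ea0 by simp
    qed
    ultimately have Lg1: "Lg \<ge> 1" by linarith
    show ?thesis
    proof (cases "card S = 0")
      case True
      hence "error (subcube_list_hyp L H) S = 0" by (simp add: error_def)
      moreover have "0 \<le> 8 * (\<epsilon> * Lg + ea)" using nn ea0 by simp
      ultimately show ?thesis unfolding Lg_def by simp
    next
      case Sne: False
      have Npos: "N > 0" using Sne by (simp add: N_def)
      define E where "E = \<epsilon> * N"
      have Eb: "real (card {(x, y) \<in> S. subcube_list_hyp P H x \<noteq> Some y}) \<le> E"
      proof -
        have "real (card {(x, y) \<in> S. subcube_list_hyp P H x \<noteq> Some y}) / N \<le> \<epsilon>"
          using errP by (simp add: error_def N_def)
        thus ?thesis using Npos by (simp add: pos_divide_le_eq E_def)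
      qed
      show ?thesis
      proof (cases "4*E \<le> N")
        case False
        hence "1 < 4 * \<epsilon>" using Npos by (simp add: E_def)
        moreover have "4 * \<epsilon> \<le> 4 * (\<epsilon> * Lg)" using Lg1 eps0
          by (simp add: mult_left_mono[of 1 Lg \<epsilon>, simplified])
        ultimately have "1 \<le> 8 * (\<epsilon> * Lg + ea)" using ea0 unfolding distrib_left by linarith
        thus ?thesis using errL1 unfolding Lg_def by linarith
      next
        case True
        obtain R k where reach: "fsl_reach n d S H ea s R L k" and stop: "\<not> loop_cond S ea s R k"
          using fsl by (auto simp: find_subcube_list_def)
        define t where "t = max (4*E) (ea*N)"
        have inv: "R \<subseteq> S \<and> (\<forall>z\<in>R. \<forall>\<rho>\<in>set L. \<not> consistent (fst z) \<rho>)
          \<and> (\<forall>z\<in>S-R. find (consistent (fst z)) L \<noteq> None)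
          \<and> real (card R) \<le> (1 - 1/(2*real s))^k * N
          \<and> real (card {(x,y)\<in>S-R. subcube_list_hyp L H x \<noteq> Some y}) \<le> Fpot E N t (real (card R))"
          using reach_inv[OF reach finS s1 lenP Pprop disj Eb ea0 ea1] True Sne
          unfolding N_def t_def by simp
        hence RS: "R \<subseteq> S" and nc: "\<forall>z\<in>R. \<forall>\<rho>\<in>set L. \<not> consistent (fst z) \<rho>"
          and geo: "real (card R) \<le> (1 - 1/(2*real s))^k * N"
          and pot: "real (card {(x,y)\<in>S-R. subcube_list_hyp L H x \<noteq> Some y}) \<le> Fpot E N t (real (card R))"
          by auto
        have finR: "finite R" using RS finS finite_subset by blast
        have rf: "real (card R) \<le> ea * N"
        proof (cases "real (card R) / N > ea")
          case False
          thus ?thesis using Npos by (simp add: field_simps)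
        next
          case True
          hence kb: "k \<ge> iter_bound s ea" using stop by (simp add: loop_cond_def N_def)
          have kge: "real k \<ge> 2 * real s * Lg"
            using kb unfolding iter_bound_def Lg_def by linarith
          define q where "q = 1 - 1/(2*real s)"
          have q0: "q \<ge> 0" using s1 by (simp add: q_def field_simps)
          have qe: "q \<le> exp (- (1/(2*real s)))" unfolding q_def
            using exp_ge_add_one_self[of "- (1/(2*real s))"] by linarith
          have "q^k \<le> exp (- (1/(2*real s)))^k" using q0 qe by (intro power_mono)
          also have "\<dots> = exp (real k * (- (1/(2*real s))))" by (rule exp_of_nat_mult[symmetric])
          also have "\<dots> \<le> exp (- Lg)"
          proof -
            have "real k * (1/(2*real s)) \<ge> Lg" using kge s1 by (simp add: field_simps)
            thus ?thesis by simp
          qed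
          also have "exp (- Lg) = ea" using ea0 by (simp add: Lg_def ln_div exp_minus)
          finally have "q^k \<le> ea" .
          hence "q^k * N \<le> ea * N" using Npos by (intro mult_right_mono) auto
          thus ?thesis using geo unfolding q_def by linarith
        qed
        have t0: "t > 0" unfolding t_def using ea0 Npos by (smt (verit) mult_pos_pos)
        have tge: "t \<ge> ea * N" unfolding t_def by simp
        have tle: "t \<le> 4*E + ea*N" unfolding t_def using eps0 Npos ea0 by (simp add: E_def)
        have bnd: "real (card {(x,y)\<in>S-R. subcube_list_hyp L H x \<noteq> Some y}) + real (card R)
            \<le> 4*E*ln (N/t) + t"
        proof (cases "real (card R) \<ge> t")
          case True
          hence "real (card R) = t" using rf tge by linarith
          thus ?thesis using pot by (simp add: Fpot_def)
        next
          case False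
          thus ?thesis using pot by (simp add: Fpot_def)
        qed
        have lnb: "ln (N/t) \<le> Lg"
        proof -
          have "N/t \<le> 1/ea" using tge Npos t0 ea0 by (simp add: field_simps)
          moreover have "N/t > 0" using Npos t0 by simp
          ultimately show ?thesis unfolding Lg_def by (rule ln_mono)
        qed
        have E0: "E \<ge> 0" using eps0 Npos by (simp add: E_def)
        have Bad_eq: "Bad = {(x,y)\<in>S-R. subcube_list_hyp L H x \<noteq> Some y} \<union> R"
        proof -
          have "subcube_list_hyp L H x = None" if "(x,y) \<in> R" for x y
            using nc that by (force simp: hyp_find find_None_iff)
          thus ?thesis using RS by (auto simp: Bad_def)
        qed
        have "card Bad = card {(x,y)\<in>S-R. subcube_list_hyp L H x \<noteq> Some y} + card R"
          unfolding Bad_eq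
          by (intro card_Un_disjoint) (auto intro: finite_subset[OF _ finS] simp: finR)
        hence "real (card Bad) \<le> 4*E*ln (N/t) + t" using bnd by simp
        also have "\<dots> \<le> 4*E*Lg + (4*E + ea*N)" using lnb tle E0
          by (intro add_mono mult_left_mono) auto
        also have "\<dots> \<le> 8*E*Lg + ea*N" using mult_left_mono[OF Lg1 E0] by simp
        finally have "real (card Bad) / N \<le> (8*E*Lg + ea*N) / N" using Npos by (intro divide_right_mono) auto
        also have "\<dots> = 8 * \<epsilon> * Lg + ea" using Npos by (simp add: E_def field_simps)
        also have "\<dots> \<le> 8 * (\<epsilon> * Lg + ea)" using ea0 by simp
        finally show ?thesis unfolding errL_def' Lg_def .
      qed
    qed
  qed
qed (simp)

end
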